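(* Let $G$ be the connected group with Lie algebra $\mathbf g=su_2(\mathbb C)\ltimes\mathbb R^3$ described below, $H$ the subgroup $\{(A,0)\}$ with Lie algebra $\mathbf h=\langle X,Y,Z\rangle$, and $\mathbf m_1=\langle V_1+Z,\ V_2+Y,\ V_3-X\rangle$. There is no global almost differentiable strongly left alternative left A-loop with $G$ as group topologically generated by its left translations, $H$ as stabilizer of the identity, and $T_1\sigma(G/H)=\mathbf m_1$.
   Context: $G$ consists of pairs $(A,X)$ with $A\in SU_2(\mathbb C)$ modulo $\pm 1$ and $X=\begin{pmatrix}k&li+n\\-li+n&-k\end{pmatrix}$, $k,l,n\in\mathbb R$, multiplied by $(A_1,X_1)(A_2,X_2)=(A_1A_2,A_2^{-1}X_1A_2+X_2)$. Basis of $\mathbf g$: $X=(\begin{pmatrix}i&0\\0&-i\end{pmatrix},0)$, $Y=(\begin{pmatrix}0&i\\i&0\end{pmatrix},0)$, $Z=(\begin{pmatrix}0&-1\\1&0\end{pmatrix},0)$, $V_1=(0,\begin{pmatrix}0&i\\-i&0\end{pmatrix})$, $V_2=(0,\begin{pmatrix}0&1\\1&0\end{pmatrix})$, $V_3=(0,\begin{pmatrix}-1&0\\0&1\end{pmatrix})$. A loop is a set with a binary operation and two-sided identity $e$ with uniquely solvable left and right division; a left A-loop has every $\lambda_{xy}^{-1}\lambda_x\lambda_y$ an automorphism ($\lambda_a(y)=a\cdot y$). For a connected loop, $G$ is the group topologically generated by left translations, $H$ the stabilizer of $e$, and left translations form the image of a sharply transitive global section $\sigma:G/H\to G$, $\sigma(H)=1$;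 almost differentiable means $G$ Lie and $\sigma$ differentiable; strongly left alternative means $\exp(T_1\sigma(G/H))\subseteq\sigma(G/H)$. *)

theory Defs
  imports "HOL-Analysis.Analysis"
begin

type_synonym cmat = "complex^2^2"
type_synonym pt = "cmat \<times> cmat"

definition mat2 :: "complex \<Rightarrow> complex \<Rightarrow> complex \<Rightarrow> complex \<Rightarrow> cmat" where
  "mat2 a b c d = (\<chi> i j. if i = 1 then (if j = 1 then a else b) else (if j = 1 then c else d))"

definition adjm :: "cmat \<Rightarrow> cmat" where
  "adjm A = (\<chi> i j. cnj (A $ j $ i))"

definition SU2 :: "cmat set" where
  "SU2 = {A. adjm A ** A = mat 1 \<and> det A = 1}"

definition hmat :: "real \<Rightarrow> real \<Rightarrow> real \<Rightarrow> cmat" where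
  "hmat k l n = mat2 (complex_of_real k) (complex_of_real l * \<i> + complex_of_real n)
                     (- complex_of_real l * \<i> + complex_of_real n) (- complex_of_real k)"

definition Vsp :: "cmat set" where
  "Vsp = {hmat k l n | k l n. True}"

text \<open>Representatives (A,X) and their multiplication (the covering group SU2 x R^3).\<close>
definition Gt :: "pt set" where
  "Gt = SU2 \<times> Vsp"

definition gmul :: "pt \<Rightarrow> pt \<Rightarrow> pt" where
  "gmul p q = (fst p ** fst q, matrix_inv (fst q) ** snd p ** fst q + snd q)"

text \<open>Elements of G: pairs (A,X) with A taken modulo +-1, i.e. classes {(A,X),(-A,X)}.\<close>
definition cls :: "pt \<Rightarrow> pt set" where
  "cls p = {(fst p, snd p), (- fst p, snd p)}"

definition G :: "pt set set" where
  "G = cls ` Gt"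

definition gmulc :: "pt set \<Rightarrow> pt set \<Rightarrow> pt set" where
  "gmulc g h = {gmul p q | p q. p \<in> g \<and> q \<in> h}"

definition ginv :: "pt set \<Rightarrow> pt set" where
  "ginv g = {(matrix_inv (fst p), - (fst p ** snd p ** matrix_inv (fst p))) | p. p \<in> g}"

definition gone :: "pt set" where
  "gone = cls (mat 1, 0)"

definition H :: "pt set set" where
  "H = {cls (A, 0) | A. A \<in> SU2}"

definition lcos :: "pt set \<Rightarrow> pt set set" where
  "lcos g = (\<lambda>h. gmulc g h) ` H"

definition GH :: "pt set set set" where
  "GH = lcos ` G"

definition act :: "pt set \<Rightarrow> pt set set \<Rightarrow> pt set set" where
  "act g C = (\<lambda>h. gmulc g h) ` C"

text \<open>Coordinate chart G/H -> R^3 (= Vsp): the coset of (A,X) is sent to A X A^-1.\<close>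
definition chart :: "pt set set \<Rightarrow> cmat" where
  "chart C = (THE P. \<forall>g\<in>C. \<forall>p\<in>g. P = fst p ** snd p ** matrix_inv (fst p))"

definition lmul :: "(pt set set \<Rightarrow> pt set) \<Rightarrow> pt set set \<Rightarrow> pt set set \<Rightarrow> pt set set" where
  "lmul \<sigma> x y = act (\<sigma> x) y"

text \<open>sigma: G/H -> G is a global section with sigma(H)=1 whose image is sharply transitive on G/H
  (equivalently, (G/H, lmul sigma) is a loop with identity H and left translations sigma(G/H)).\<close>
definition loop_section :: "(pt set set \<Rightarrow> pt set) \<Rightarrow> bool" where
  "loop_section \<sigma> \<longleftrightarrow>
     (\<forall>C\<in>GH. \<sigma> C \<in> G \<and> \<sigma> C \<in> C) \<and> \<sigma> (lcos gone) = gone \<and>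
     (\<forall>x\<in>GH. \<forall>y\<in>GH. \<exists>!z. z \<in> GH \<and> act (\<sigma> z) x = y)"

inductive_set gen :: "pt set set \<Rightarrow> pt set set" for S where
  gen_base: "g \<in> S \<Longrightarrow> g \<in> gen S"
| gen_one: "gone \<in> gen S"
| gen_mul: "g \<in> gen S \<Longrightarrow> h \<in> gen S \<Longrightarrow> gmulc g h \<in> gen S"
| gen_inv: "g \<in> gen S \<Longrightarrow> ginv g \<in> gen S"

text \<open>G is topologically generated by sigma(G/H): the closure of the generated subgroup is G
  (topology of G = quotient topology from Gt, a subspace of cmat x cmat).\<close>
definition top_generates :: "(pt set set \<Rightarrow> pt set) \<Rightarrow> bool" where
  "top_generates \<sigma> \<longleftrightarrow> closure (\<Union> (gen (\<sigma> ` GH))) = Gt"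

definition left_A_loop :: "(pt set set \<Rightarrow> pt set) \<Rightarrow> bool" where
  "left_A_loop \<sigma> \<longleftrightarrow>
    (\<forall>x\<in>GH. \<forall>y\<in>GH.
       let \<phi> = (\<lambda>z. inv_into GH (lmul \<sigma> (lmul \<sigma> x y)) (lmul \<sigma> x (lmul \<sigma> y z)))
       in bij_betw \<phi> GH GH \<and> (\<forall>a\<in>GH. \<forall>b\<in>GH. \<phi> (lmul \<sigma> a b) = lmul \<sigma> (\<phi> a) (\<phi> b)))"

text \<open>sigma is differentiable: in the chart of G/H, sigma admits near every point a differentiable
  local lift to representatives (SU2 -> SU2/+-1 is a local diffeomorphism).\<close>
definition sigma_differentiable :: "(pt set set \<Rightarrow> pt set) \<Rightarrow> bool" where
  "sigma_differentiable \<sigma> \<longleftrightarrow>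
    (\<forall>C0\<in>GH. \<exists>U \<tau>. open U \<and> chart C0 \<in> U \<and>
       (\<forall>Q\<in>U \<inter> Vsp. \<tau> differentiable (at Q within Vsp)) \<and>
       (\<forall>C\<in>GH. chart C \<in> U \<longrightarrow> \<tau> (chart C) \<in> \<sigma> C))"

text \<open>Tangent space at 1 of sigma(G/H), as a subspace of g = su2 x R^3 inside cmat x cmat.\<close>
definition tangent_one :: "(pt set set \<Rightarrow> pt set) \<Rightarrow> pt set" where
  "tangent_one \<sigma> = {v. \<exists>U \<tau> D. open U \<and> 0 \<in> U \<and>
       (\<forall>Q\<in>U \<inter> Vsp. \<tau> differentiable (at Q within Vsp)) \<and>
       (\<forall>C\<in>GH. chart C \<in> U \<longrightarrow> \<tau> (chart C) \<in> \<sigma> C) \<and>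
       \<tau> 0 = (mat 1, 0) \<and> (\<tau> has_derivative D) (at 0 within Vsp) \<and> v \<in> D ` Vsp}"

definition expG :: "pt \<Rightarrow> pt set set" where
  "expG v = {cls (\<gamma> 1) | \<gamma>. (\<forall>t. \<gamma> t \<in> Gt) \<and> (\<forall>s t. \<gamma> (s + t) = gmul (\<gamma> s) (\<gamma> t)) \<and>
                          (\<gamma> has_derivative (\<lambda>t. t *\<^sub>R v)) (at 0)}"

definition strongly_left_alternative :: "(pt set set \<Rightarrow> pt set) \<Rightarrow> bool" where
  "strongly_left_alternative \<sigma> \<longleftrightarrow> (\<forall>v\<in>tangent_one \<sigma>. expG v \<subseteq> \<sigma> ` GH)"

definition LX :: pt where "LX = (mat2 \<i> 0 0 (- \<i>), 0)"
definition LY :: pt where "LY = (mat2 0 \<i> \<i> 0, 0)"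
definition LZ :: pt where "LZ = (mat2 0 (-1) 1 0, 0)"
definition LV1 :: pt where "LV1 = (0, mat2 0 \<i> (- \<i>) 0)"
definition LV2 :: pt where "LV2 = (0, mat2 0 1 1 0)"
definition LV3 :: pt where "LV3 = (0, mat2 (-1) 0 0 1)"

definition m1 :: "pt set" where
  "m1 = span {LV1 + LZ, LV2 + LY, LV3 - LX}"

end

theory Submission
  imports Defs
begin

lemma mat2_nth[simp]:
  "mat2 a b c d $ 1 $ 1 = a" "mat2 a b c d $ 1 $ 2 = b"
  "mat2 a b c d $ 2 $ 1 = c" "mat2 a b c d $ 2 $ 2 = d"
  by (simp_all add: mat2_def)

lemma cmat_eq_iff: "(A::cmat) = B \<longleftrightarrow> A$1$1 = B$1$1 \<and> A$1$2 = B$1$2 \<and> A$2$1 = B$2$1 \<and> A$2$2 = B$2$2"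
  by (auto simp: vec_eq_iff forall_2)

lemma mat2_eq_iff[simp]: "mat2 a b c d = mat2 a' b' c' d' \<longleftrightarrow> a = a' \<and> b = b' \<and> c = c' \<and> d = d'"
  by (simp add: cmat_eq_iff)

lemma mat2_eta: "(A::cmat) = mat2 (A$1$1) (A$1$2) (A$2$1) (A$2$2)"
  by (simp add: cmat_eq_iff)

lemma mat2_mult[simp]: "mat2 a b c d ** mat2 a' b' c' d' = mat2 (a*a'+b*c') (a*b'+b*d') (c*a'+d*c') (c*b'+d*d')"
  by (simp add: cmat_eq_iff matrix_matrix_mult_def sum_2)

lemma mat2_add[simp]: "mat2 a b c d + mat2 a' b' c' d' = mat2 (a+a') (b+b') (c+c') (d+d')"
  by (simp add: cmat_eq_iff)

lemma mat2_diff[simp]: "mat2 a b c d - mat2 a' b' c' d' = mat2 (a-a') (b-b') (c-c') (d-d')"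
  by (simp add: cmat_eq_iff)

lemma mat2_uminus[simp]: "- mat2 a b c d = mat2 (-a) (-b) (-c) (-d)"
  by (simp add: cmat_eq_iff)

lemma mat2_scaleR[simp]: "r *\<^sub>R mat2 a b c d = mat2 (r *\<^sub>R a) (r *\<^sub>R b) (r *\<^sub>R c) (r *\<^sub>R d)"
  by (simp add: cmat_eq_iff)

lemma mat2_one: "(mat 1 :: cmat) = mat2 1 0 0 1"
  by (simp add: cmat_eq_iff mat_def)

lemma mat2_zero: "(0 :: cmat) = mat2 0 0 0 0"
  by (simp add: cmat_eq_iff)

lemma mat2_det[simp]: "det (mat2 a b c d) = a*d - b*c"
  by (simp add: det_2)

lemma mat2_adjm[simp]: "adjm (mat2 a b c d) = mat2 (cnj a) (cnj c) (cnj b) (cnj d)"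
  by (simp add: cmat_eq_iff adjm_def)

lemma matrix_inv_eq: "(A::cmat) ** B = mat 1 \<Longrightarrow> matrix_inv A = B"
proof -
  assume AB: "A ** B = mat 1"
  hence BA: "B ** A = mat 1" using matrix_left_right_inverse by blast
  have ex: "A ** matrix_inv A = mat 1 \<and> matrix_inv A ** A = mat 1"
    unfolding matrix_inv_def by (rule someI[of _ B]) (use AB BA in auto)
  have "matrix_inv A = (B ** A) ** matrix_inv A" using BA by (simp add: matrix_mul_lid)
  also have "\<dots> = B ** (A ** matrix_inv A)" by (simp add: matrix_mul_assoc)
  also have "\<dots> = B" using ex by (simp add: matrix_mul_rid)
  finally show ?thesis .
qed

lemma cmat_rdistrib: "((A::cmat) + B) ** (C::cmat) = A ** C + B ** C"
  unfolding cmat_eq_iff by (simp add: matrix_matrix_mult_def sum_2 algebra_simps)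
lemma cmat_ldistrib: "(C::cmat) ** (A + (B::cmat)) = C ** A + C ** B"
  unfolding cmat_eq_iff by (simp add: matrix_matrix_mult_def sum_2 algebra_simps)
lemma cmat_neg_l[simp]: "(- (A::cmat)) ** (B::cmat) = - (A ** B)"
  unfolding cmat_eq_iff by (simp add: matrix_matrix_mult_def sum_2 algebra_simps)
lemma cmat_neg_r[simp]: "(A::cmat) ** (- (B::cmat)) = - (A ** B)"
  unfolding cmat_eq_iff by (simp add: matrix_matrix_mult_def sum_2 algebra_simps)

lemma inv_right: "invertible (A::cmat) \<Longrightarrow> A ** matrix_inv A = mat 1"
  unfolding invertible_def matrix_inv_def by (rule someI2_ex) auto
lemma inv_left: "invertible (A::cmat) \<Longrightarrow> matrix_inv A ** A = mat 1"
  unfolding invertible_def matrix_inv_def by (rule someI2_ex) auto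

lemma inv_mult: assumes b: "invertible (B::cmat)" and c: "invertible (C::cmat)" shows "matrix_inv (B ** C) = matrix_inv C ** matrix_inv B"
proof (rule matrix_inv_eq)
  have "B ** C ** (matrix_inv C ** matrix_inv B) = B ** (C ** matrix_inv C) ** matrix_inv B"
    by (simp add: matrix_mul_assoc)
  also have "\<dots> = mat 1" using b c by (simp add: inv_right)
  finally show "B ** C ** (matrix_inv C ** matrix_inv B) = mat 1" .
qed

lemma inv_neg: "invertible (B::cmat) \<Longrightarrow> matrix_inv (- B) = - matrix_inv B"
  by (rule matrix_inv_eq) (simp add: inv_right)

lemma invertible_neg: "invertible (B::cmat) \<Longrightarrow> invertible (- B)"
  unfolding invertible_def by (metis cmat_neg_l cmat_neg_r minus_minus)

lemma gmul_assoc: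
  assumes "invertible (fst q)" "invertible (fst r)"
  shows "gmul (gmul p q) r = gmul p (gmul q r)"
  using assms
  by (simp add: gmul_def inv_mult matrix_mul_assoc cmat_rdistrib cmat_ldistrib)

definition invcls :: "pt set \<Rightarrow> bool" where "invcls g \<longleftrightarrow> (\<forall>p\<in>g. invertible (fst p))"

lemma gmulc_mem: "p \<in> g \<Longrightarrow> q \<in> h \<Longrightarrow> gmul p q \<in> gmulc g h"
  unfolding gmulc_def by blast
lemma gmulc_memE: "x \<in> gmulc g h \<Longrightarrow> (\<And>p q. x = gmul p q \<Longrightarrow> p \<in> g \<Longrightarrow> q \<in> h \<Longrightarrow> P) \<Longrightarrow> P"
  unfolding gmulc_def by blast

lemma gmulc_assoc:
  assumes h: "invcls h" and k: "invcls k"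
  shows "gmulc (gmulc g h) k = gmulc g (gmulc h k)"
proof
  show "gmulc (gmulc g h) k \<subseteq> gmulc g (gmulc h k)"
  proof
    fix x assume "x \<in> gmulc (gmulc g h) k"
    then obtain y r where x: "x = gmul y r" and y: "y \<in> gmulc g h" and r: "r \<in> k"
      by (rule gmulc_memE)
    from y obtain p q where y': "y = gmul p q" and p: "p \<in> g" and q: "q \<in> h"
      by (rule gmulc_memE)
    have iq: "invertible (fst q)" using h q unfolding invcls_def by simp
    have ir: "invertible (fst r)" using k r unfolding invcls_def by simp
    have "x = gmul p (gmul q r)" using gmul_assoc[OF iq ir, of p] x y' by simp
    thus "x \<in> gmulc g (gmulc h k)" using gmulc_mem[OF p gmulc_mem[OF q r]] by simp
  qed
  show "gmulc g (gmulc h k) \<subseteq> gmulc (gmulc g h) k"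
  proof
    fix x assume "x \<in> gmulc g (gmulc h k)"
    then obtain p y where x: "x = gmul p y" and p: "p \<in> g" and y: "y \<in> gmulc h k"
      by (rule gmulc_memE)
    from y obtain q r where y': "y = gmul q r" and q: "q \<in> h" and r: "r \<in> k"
      by (rule gmulc_memE)
    have iq: "invertible (fst q)" using h q unfolding invcls_def by simp
    have ir: "invertible (fst r)" using k r unfolding invcls_def by simp
    have "x = gmul (gmul p q) r" using gmul_assoc[OF iq ir, of p] x y' by simp
    thus "x \<in> gmulc (gmulc g h) k" using gmulc_mem[OF gmulc_mem[OF p q] r] by simp
  qed
qed

lemma adjm_mult: "adjm ((A::cmat) ** B) = adjm B ** adjm A"
  by (simp add: cmat_eq_iff adjm_def matrix_matrix_mult_def sum_2 mult.commute)
lemma adjm_adjm[simp]: "adjm (adjm A) = A"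
  by (simp add: cmat_eq_iff adjm_def)
lemma det_adjm: "det (adjm (A::cmat)) = cnj (det A)"
  by (simp add: det_2 adjm_def mult.commute)

lemma SU2_right: "A \<in> SU2 \<Longrightarrow> A ** adjm A = mat 1"
  unfolding SU2_def using matrix_left_right_inverse by blast
lemma SU2_inv: "A \<in> SU2 \<Longrightarrow> matrix_inv A = adjm A"
  by (rule matrix_inv_eq) (rule SU2_right)
lemma SU2_invertible: "A \<in> SU2 \<Longrightarrow> invertible A"
  unfolding invertible_def using SU2_right by (auto simp: SU2_def)
lemma SU2_adjm: "A \<in> SU2 \<Longrightarrow> adjm A \<in> SU2"
  using SU2_right by (simp add: SU2_def det_adjm)
lemma SU2_mult: "A \<in> SU2 \<Longrightarrow> B \<in> SU2 \<Longrightarrow> A ** B \<in> SU2"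
proof -
  assume a: "A \<in> SU2" and b: "B \<in> SU2"
  have "adjm (A ** B) ** (A ** B) = adjm B ** (adjm A ** A) ** B"
    by (simp add: adjm_mult matrix_mul_assoc)
  also have "\<dots> = mat 1" using a b by (simp add: SU2_def)
  finally show ?thesis using a b by (simp add: SU2_def det_mul)
qed

lemma G_invcls: "g \<in> G \<Longrightarrow> invcls g"
  by (auto simp: G_def Gt_def cls_def invcls_def SU2_invertible invertible_neg)
lemma H_invcls: "h \<in> H \<Longrightarrow> invcls h"
  by (auto simp: H_def cls_def invcls_def SU2_invertible invertible_neg)

lemma gmulc_cls:
  assumes "invertible B"
  shows "gmulc (cls (A, X)) (cls (B, Y)) = cls (A ** B, matrix_inv B ** X ** B + Y)"
proof -
  have g1: "gmul (A,X) (B,Y) = (A ** B, matrix_inv B ** X ** B + Y)" by (simp add: gmul_def)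
  have g2: "gmul (-A,X) (B,Y) = (- (A ** B), matrix_inv B ** X ** B + Y)" by (simp add: gmul_def)
  show ?thesis
  proof
    show "gmulc (cls (A, X)) (cls (B, Y)) \<subseteq> cls (A ** B, matrix_inv B ** X ** B + Y)"
    proof
      fix x assume "x \<in> gmulc (cls (A, X)) (cls (B, Y))"
      then obtain p q where x: "x = gmul p q" and p: "p = (A,X) \<or> p = (-A,X)" and q: "q = (B,Y) \<or> q = (-B,Y)"
        unfolding gmulc_def cls_def by auto
      have g3: "gmul (A,X) (-B,Y) = (- (A ** B), matrix_inv B ** X ** B + Y)"
        using assms by (simp add: gmul_def inv_neg)
      have g4: "gmul (-A,X) (-B,Y) = (A ** B, matrix_inv B ** X ** B + Y)"
        using assms by (simp add: gmul_def inv_neg)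
      show "x \<in> cls (A ** B, matrix_inv B ** X ** B + Y)"
        using p q unfolding x cls_def by (elim disjE) (simp_all only: g1 g2 g3 g4 fst_conv snd_conv, simp_all)
    qed
    show "cls (A ** B, matrix_inv B ** X ** B + Y) \<subseteq> gmulc (cls (A, X)) (cls (B, Y))"
    proof -
      have m1: "gmul (A,X) (B,Y) \<in> gmulc (cls (A, X)) (cls (B, Y))"
        unfolding gmulc_def cls_def fst_conv snd_conv by blast
      have m2: "gmul (-A,X) (B,Y) \<in> gmulc (cls (A, X)) (cls (B, Y))"
        unfolding gmulc_def cls_def fst_conv snd_conv by blast
      show ?thesis using m1 m2 unfolding g1 g2 by (auto simp: cls_def)
    qed
  qed
qed

lemma act_lcos:
  assumes "k \<in> G"
  shows "act g (lcos k) = lcos (gmulc g k)"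
proof -
  have "act g (lcos k) = (\<lambda>h. gmulc g (gmulc k h)) ` H"
    unfolding act_def lcos_def by (simp add: image_image)
  also have "\<dots> = (\<lambda>h. gmulc (gmulc g k) h) ` H"
    using assms by (intro image_cong refl) (simp add: gmulc_assoc G_invcls H_invcls)
  finally show ?thesis unfolding lcos_def .
qed

lemma H_translate:
  assumes "A0 \<in> SU2"
  shows "(\<lambda>h. gmulc (cls (A0, 0)) h) ` H = H"
proof
  show "(\<lambda>h. gmulc (cls (A0, 0)) h) ` H \<subseteq> H"
  proof
    fix h' assume "h' \<in> (\<lambda>h. gmulc (cls (A0, 0)) h) ` H"
    then obtain C where C: "C \<in> SU2" "h' = gmulc (cls (A0, 0)) (cls (C, 0))" by (auto simp: H_def)
    hence "h' = cls (A0 ** C, 0)" by (simp add: gmulc_cls SU2_invertible)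
    moreover have "A0 ** C \<in> SU2" using assms C by (simp add: SU2_mult)
    ultimately show "h' \<in> H" by (auto simp: H_def)
  qed
  show "H \<subseteq> (\<lambda>h. gmulc (cls (A0, 0)) h) ` H"
  proof
    fix h assume "h \<in> H"
    then obtain C where C: "C \<in> SU2" "h = cls (C, 0)" by (auto simp: H_def)
    have B: "adjm A0 ** C \<in> SU2" using assms C by (simp add: SU2_mult SU2_adjm)
    have "A0 ** (adjm A0 ** C) = C" using assms by (simp add: matrix_mul_assoc SU2_right)
    hence "h = gmulc (cls (A0, 0)) (cls (adjm A0 ** C, 0))"
      using B C by (simp add: gmulc_cls SU2_invertible)
    moreover have "cls (adjm A0 ** C, 0) \<in> H" using B by (auto simp: H_def)
    ultimately show "h \<in> (\<lambda>h. gmulc (cls (A0, 0)) h) ` H" by blast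
  qed
qed

lemma lcos_mulH:
  assumes "A0 \<in> SU2"
  shows "lcos (gmulc g (cls (A0, 0))) = lcos g"
proof -
  have h0: "cls (A0, 0) \<in> H" using assms by (auto simp: H_def)
  have "lcos (gmulc g (cls (A0, 0))) = (\<lambda>h. gmulc g (gmulc (cls (A0, 0)) h)) ` H"
    unfolding lcos_def using h0
    by (intro image_cong refl) (simp add: gmulc_assoc H_invcls)
  also have "\<dots> = (\<lambda>h. gmulc g h) ` ((\<lambda>h. gmulc (cls (A0, 0)) h) ` H)"
    by (simp add: image_image)
  also have "\<dots> = lcos g" using H_translate[OF assms] by (simp add: lcos_def)
  finally show ?thesis .
qed

definition "Zm = mat2 0 (-1) 1 0"
definition "Ym = mat2 0 \<i> \<i> 0"
definition "Xm = mat2 \<i> 0 0 (-\<i>)"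
definition "V1m = mat2 0 \<i> (-\<i>) 0"
definition "V2m = mat2 0 1 1 0"

definition R1 :: "real \<Rightarrow> cmat" where
  "R1 x = mat2 (of_real (cos x)) (- of_real (sin x)) (of_real (sin x)) (of_real (cos x))"
definition R2 :: "real \<Rightarrow> cmat" where
  "R2 x = mat2 (of_real (cos x)) (\<i> * of_real (sin x)) (\<i> * of_real (sin x)) (of_real (cos x))"

lemma cs1: "complex_of_real (cos x) * complex_of_real (cos x) + complex_of_real (sin x) * complex_of_real (sin x) = 1"
  by (metis of_real_add of_real_mult of_real_1 sin_cos_squared_add3)

lemma scR: "r *\<^sub>R (z::complex) = of_real r * z"
  by (simp add: scaleR_conv_of_real)

lemma cs2: "complex_of_real (cos x) * complex_of_real (cos x) - \<i> * complex_of_real (sin x) * (\<i> * complex_of_real (sin x)) = 1"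
proof -
  have "complex_of_real (cos x) * complex_of_real (cos x) - \<i> * complex_of_real (sin x) * (\<i> * complex_of_real (sin x))
    = complex_of_real (cos x) * complex_of_real (cos x) + complex_of_real (sin x) * complex_of_real (sin x)"
    by (simp add: algebra_simps)
  thus ?thesis using cs1 by simp
qed

lemma csq: "complex_of_real (cos x) * complex_of_real (cos x) = 1 - complex_of_real (sin x) * complex_of_real (sin x)"
  using cs1[of x] by (simp add: algebra_simps)

lemma R1_alt: "R1 x = cos x *\<^sub>R mat 1 + sin x *\<^sub>R Zm"
  by (simp add: R1_def Zm_def mat2_one scR)
lemma R2_alt: "R2 x = cos x *\<^sub>R mat 1 + sin x *\<^sub>R Ym"
  by (simp add: R2_def Ym_def mat2_one scR mult.commute)

lemma R1_SU2: "R1 x \<in> SU2"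
  by (simp add: R1_def SU2_def mat2_one cs1 add.commute)
lemma R2_SU2: "R2 x \<in> SU2"
  by (simp add: R2_def SU2_def mat2_one cs1 cs2 add.commute algebra_simps)

lemma R1_add: "R1 s ** R1 t = R1 (s + t)"
  by (simp add: R1_def cos_add sin_add algebra_simps)
lemma R2_add: "R2 s ** R2 t = R2 (s + t)"
  by (simp add: R2_def cos_add sin_add algebra_simps)

lemma R1_inv: "matrix_inv (R1 t) = R1 (- t)"
  by (rule matrix_inv_eq) (simp add: R1_add mat2_one R1_def csq algebra_simps)
lemma R2_inv: "matrix_inv (R2 t) = R2 (- t)"
  by (rule matrix_inv_eq) (simp add: R2_add mat2_one R2_def csq algebra_simps)

lemma R1_V1: "R1 (- t) ** (r *\<^sub>R V1m) ** R1 t = r *\<^sub>R V1m"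
  by (simp add: R1_def V1m_def algebra_simps scR csq)
lemma R2_V2: "R2 (- t) ** (r *\<^sub>R V2m) ** R2 t = r *\<^sub>R V2m"
  by (simp add: R2_def V2m_def algebra_simps scR csq)

lemma V1_Vsp: "r *\<^sub>R V1m \<in> Vsp"
  unfolding Vsp_def by (rule CollectI, rule exI[of _ 0], rule exI[of _ r], rule exI[of _ 0])
    (simp add: hmat_def V1m_def scR)
lemma V2_Vsp: "r *\<^sub>R V2m \<in> Vsp"
  unfolding Vsp_def by (rule CollectI, rule exI[of _ 0], rule exI[of _ 0], rule exI[of _ r])
    (simp add: hmat_def V2m_def scR)

lemma expG_memI:
  assumes "\<And>t. \<gamma> t \<in> Gt" "\<And>s t. \<gamma> (s + t) = gmul (\<gamma> s) (\<gamma> t)"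
    "(\<gamma> has_vector_derivative v) (at 0)"
  shows "cls (\<gamma> 1) \<in> expG v"
  using assms unfolding expG_def has_vector_derivative_def by blast

lemma exp1: "cls (Zm, (pi/2) *\<^sub>R V1m) \<in> expG ((pi/2) *\<^sub>R (LV1 + LZ))"
proof -
  define a :: real where "a = pi/2"
  define \<gamma> where "\<gamma> t = (R1 (a*t), (a*t) *\<^sub>R V1m)" for t
  have "cls (\<gamma> 1) \<in> expG (a *\<^sub>R (LV1 + LZ))"
  proof (rule expG_memI)
    show "\<gamma> t \<in> Gt" for t by (simp add: \<gamma>_def Gt_def R1_SU2 V1_Vsp)
    show "\<gamma> (s + t) = gmul (\<gamma> s) (\<gamma> t)" for s t
      by (simp add: \<gamma>_def gmul_def R1_add R1_inv R1_V1 algebra_simps)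
    have g: "\<gamma> = (\<lambda>t. (cos (a*t) *\<^sub>R mat 1 + sin (a*t) *\<^sub>R Zm, (a*t) *\<^sub>R V1m))"
      by (simp add: \<gamma>_def R1_alt fun_eq_iff)
    show "(\<gamma> has_vector_derivative a *\<^sub>R (LV1 + LZ)) (at 0)"
    proof -
      have c: "((\<lambda>t. cos (a*t)) has_real_derivative 0) (at 0)"
        by (auto intro!: derivative_eq_intros)
      have s: "((\<lambda>t. sin (a*t)) has_real_derivative a) (at 0)"
        by (auto intro!: derivative_eq_intros)
      have l: "((\<lambda>t. a*t) has_real_derivative a) (at 0)"
        by (auto intro!: derivative_eq_intros)
      have d: "((\<lambda>t. (cos (a*t) *\<^sub>R mat 1 + sin (a*t) *\<^sub>R Zm, (a*t) *\<^sub>R V1m)) has_vector_derivative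
          ((cos (a*0) *\<^sub>R 0 + 0 *\<^sub>R mat 1) + (sin (a*0) *\<^sub>R 0 + a *\<^sub>R Zm), (a*0) *\<^sub>R 0 + a *\<^sub>R V1m)) (at 0)"
        by (intro has_vector_derivative_Pair has_vector_derivative_add
              has_vector_derivative_scaleR[OF c] has_vector_derivative_scaleR[OF s]
              has_vector_derivative_scaleR[OF l] has_vector_derivative_const)
      show ?thesis unfolding g
        by (rule has_vector_derivative_eq_rhs[OF d]) (simp add: LV1_def LZ_def Zm_def V1m_def)
    qed
  qed
  moreover have "\<gamma> 1 = (Zm, (pi/2) *\<^sub>R V1m)"
    by (simp add: \<gamma>_def a_def R1_def Zm_def)
  ultimately show ?thesis by (simp add: a_def)
qed

lemma exp2: "cls (Ym, (pi/2) *\<^sub>R V2m) \<in> expG ((pi/2) *\<^sub>R (LV2 + LY))"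
proof -
  define a :: real where "a = pi/2"
  define \<gamma> where "\<gamma> t = (R2 (a*t), (a*t) *\<^sub>R V2m)" for t
  have "cls (\<gamma> 1) \<in> expG (a *\<^sub>R (LV2 + LY))"
  proof (rule expG_memI)
    show "\<gamma> t \<in> Gt" for t by (simp add: \<gamma>_def Gt_def R2_SU2 V2_Vsp)
    show "\<gamma> (s + t) = gmul (\<gamma> s) (\<gamma> t)" for s t
      by (simp add: \<gamma>_def gmul_def R2_add R2_inv R2_V2 algebra_simps)
    have g: "\<gamma> = (\<lambda>t. (cos (a*t) *\<^sub>R mat 1 + sin (a*t) *\<^sub>R Ym, (a*t) *\<^sub>R V2m))"
      by (simp add: \<gamma>_def R2_alt fun_eq_iff)
    show "(\<gamma> has_vector_derivative a *\<^sub>R (LV2 + LY)) (at 0)"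
    proof -
      have c: "((\<lambda>t. cos (a*t)) has_real_derivative 0) (at 0)"
        by (auto intro!: derivative_eq_intros)
      have s: "((\<lambda>t. sin (a*t)) has_real_derivative a) (at 0)"
        by (auto intro!: derivative_eq_intros)
      have l: "((\<lambda>t. a*t) has_real_derivative a) (at 0)"
        by (auto intro!: derivative_eq_intros)
      have d: "((\<lambda>t. (cos (a*t) *\<^sub>R mat 1 + sin (a*t) *\<^sub>R Ym, (a*t) *\<^sub>R V2m)) has_vector_derivative
          ((cos (a*0) *\<^sub>R 0 + 0 *\<^sub>R mat 1) + (sin (a*0) *\<^sub>R 0 + a *\<^sub>R Ym), (a*0) *\<^sub>R 0 + a *\<^sub>R V2m)) (at 0)"
        by (intro has_vector_derivative_Pair has_vector_derivative_add
              has_vector_derivative_scaleR[OF c] has_vector_derivative_scaleR[OF s]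
              has_vector_derivative_scaleR[OF l] has_vector_derivative_const)
      show ?thesis unfolding g
        by (rule has_vector_derivative_eq_rhs[OF d]) (simp add: LV2_def LY_def Ym_def V2m_def)
    qed
  qed
  moreover have "\<gamma> 1 = (Ym, (pi/2) *\<^sub>R V2m)"
    by (simp add: \<gamma>_def a_def R2_def Ym_def)
  ultimately show ?thesis by (simp add: a_def)
qed

lemma Zm_SU2: "Zm \<in> SU2" by (simp add: Zm_def SU2_def mat2_one)
lemma Xm_SU2: "Xm \<in> SU2" by (simp add: Xm_def SU2_def mat2_one)
lemma one_SU2: "mat 1 \<in> SU2" by (simp add: SU2_def mat2_one)
lemma inv_one: "matrix_inv (mat 1 :: cmat) = mat 1" by (rule matrix_inv_eq) simp
lemma inv_Xm: "matrix_inv Xm = mat2 (-\<i>) 0 0 \<i>" by (rule matrix_inv_eq) (simp add: Xm_def mat2_one)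

definition "Pm = (- (pi/4)) *\<^sub>R (V1m + V2m)"

lemma P_Vsp: "Pm \<in> Vsp"
  unfolding Vsp_def by (rule CollectI, rule exI[of _ 0], rule exI[of _ "-(pi/4)"], rule exI[of _ "-(pi/4)"])
    (simp add: hmat_def V1m_def V2m_def Pm_def scR field_simps)

lemma W1_Vsp: "(pi/2) *\<^sub>R V1m + Pm \<in> Vsp"
  unfolding Vsp_def by (rule CollectI, rule exI[of _ 0], rule exI[of _ "pi/4"], rule exI[of _ "-(pi/4)"])
    (simp add: hmat_def V1m_def V2m_def Pm_def scR field_simps)

lemma conjX: "cls (Ym, (pi/2) *\<^sub>R V2m + Pm) = gmulc (cls (Zm, (pi/2) *\<^sub>R V1m + Pm)) (cls (Xm, 0))"
  by (simp add: gmulc_cls SU2_invertible Xm_SU2 inv_Xm)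
     (simp add: Xm_def Ym_def Zm_def V1m_def V2m_def Pm_def scR field_simps)

lemma cls_neq: "cls (Zm, A) \<noteq> cls (Ym, B)"
proof
  assume eq: "cls (Zm, A) = cls (Ym, B)"
  have m: "(Zm, A) \<in> cls (Zm, A)" by (simp add: cls_def)
  have "(Zm, A) \<in> cls (Ym, B)" using m unfolding eq .
  hence "Zm = Ym \<or> Zm = - Ym" unfolding cls_def by auto
  thus False by (simp add: Zm_def Ym_def)
qed

theorem proposition23:
  shows "\<not> (\<exists>\<sigma>. loop_section \<sigma> \<and> top_generates \<sigma> \<and> left_A_loop \<sigma> \<and>
              sigma_differentiable \<sigma> \<and> strongly_left_alternative \<sigma> \<and> tangent_one \<sigma> = m1)"
proof
  assume "\<exists>\<sigma>. loop_section \<sigma> \<and> top_generates \<sigma> \<and> left_A_loop \<sigma> \<and>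
              sigma_differentiable \<sigma> \<and> strongly_left_alternative \<sigma> \<and> tangent_one \<sigma> = m1"
  then obtain \<sigma> where L: "loop_section \<sigma>" and S: "strongly_left_alternative \<sigma>"
    and T: "tangent_one \<sigma> = m1" by blast
  have v1: "(pi/2) *\<^sub>R (LV1 + LZ) \<in> tangent_one \<sigma>"
    unfolding T m1_def by (intro span_mul span_base) auto
  have v2: "(pi/2) *\<^sub>R (LV2 + LY) \<in> tangent_one \<sigma>"
    unfolding T m1_def by (intro span_mul span_base) auto
  have "cls (Zm, (pi/2) *\<^sub>R V1m) \<in> \<sigma> ` GH"
    using S v1 exp1 unfolding strongly_left_alternative_def by blast
  then obtain C1 where C1: "C1 \<in> GH" "\<sigma> C1 = cls (Zm, (pi/2) *\<^sub>R V1m)" by auto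
  have "cls (Ym, (pi/2) *\<^sub>R V2m) \<in> \<sigma> ` GH"
    using S v2 exp2 unfolding strongly_left_alternative_def by blast
  then obtain C2 where C2: "C2 \<in> GH" "\<sigma> C2 = cls (Ym, (pi/2) *\<^sub>R V2m)" by auto
  define k where "k = cls (mat 1, Pm)"
  have kG: "k \<in> G" unfolding k_def G_def Gt_def using one_SU2 P_Vsp by blast
  define x where "x = lcos k"
  have xGH: "x \<in> GH" unfolding x_def GH_def using kG by blast
  have a1: "act (\<sigma> C1) x = lcos (cls (Zm, (pi/2) *\<^sub>R V1m + Pm))"
    unfolding x_def act_lcos[OF kG] C1(2)
    by (simp add: k_def gmulc_cls inv_one SU2_invertible one_SU2)
  have a2: "act (\<sigma> C2) x = lcos (cls (Ym, (pi/2) *\<^sub>R V2m + Pm))"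
    unfolding x_def act_lcos[OF kG] C2(2)
    by (simp add: k_def gmulc_cls inv_one SU2_invertible one_SU2)
  also have "\<dots> = lcos (cls (Zm, (pi/2) *\<^sub>R V1m + Pm))"
    unfolding conjX by (rule lcos_mulH[OF Xm_SU2])
  finally have a2': "act (\<sigma> C2) x = act (\<sigma> C1) x" using a1 by simp
  have yGH: "act (\<sigma> C1) x \<in> GH"
    unfolding a1 GH_def G_def Gt_def using Zm_SU2 W1_Vsp by blast
  have u: "\<forall>x\<in>GH. \<forall>y\<in>GH. \<exists>!z. z \<in> GH \<and> act (\<sigma> z) x = y"
    using L unfolding loop_section_def by (elim conjE)
  have ex: "\<exists>!z. z \<in> GH \<and> act (\<sigma> z) x = act (\<sigma> C1) x"
    using u xGH yGH by simp
  then obtain z where z: "\<And>w. w \<in> GH \<and> act (\<sigma> w) x = act (\<sigma> C1) x \<Longrightarrow> w = z"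
    by (elim ex1E) blast
  have "C1 = z" using z C1(1) by blast
  moreover have "C2 = z" using z C2(1) a2' by blast
  ultimately have "C1 = C2" by simp
  hence "cls (Zm, (pi/2) *\<^sub>R V1m) = cls (Ym, (pi/2) *\<^sub>R V2m)" using C1 C2 by simp
  thus False using cls_neq by blast
qed

end
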